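(* Let $h>0$, let $(\tau,\mu):\mathbb R\to\mathbb R^2$ be a solution of the system $\tau'=1+K(\tau,\mu)\mu$, $\mu'=-K(\tau,\mu)\tau$, and set $k(s)=K(\tau(s),\mu(s))$. Then $k$ has at most one zero $s_1$; if it has one, then $k<0$ on $(-\infty,s_1)$ and $k>0$ on $(s_1,+\infty)$.
   Context: Fix $h>0$. For $(\tau,\mu)\in\mathbb R^2$ put $r^2=\tau^2+\mu^2$ and define $K:\mathbb R^2\to\mathbb R$ by $$K(\tau,\mu)=\frac{2\big(\tau^2+h^2(1+\mu^2)\big)\tau+(h^2-1)(1+\mu^2)\mu}{(1+r^2)(h^2+r^2)}.$$ Consider the autonomous ODE system $\tau'=1+K(\tau,\mu)\mu$, $\mu'=-K(\tau,\mu)\tau$ for functions $s\mapsto(\tau(s),\mu(s))$; all its solutions are defined on $\mathbb R$. *)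

theory Defs
  imports "HOL-Analysis.Analysis"
begin

definition Kfun :: "real \<Rightarrow> real \<Rightarrow> real \<Rightarrow> real" where
  "Kfun h \<tau> \<mu> =
     (2 * (\<tau>^2 + h^2 * (1 + \<mu>^2)) * \<tau> + (h^2 - 1) * (1 + \<mu>^2) * \<mu>)
     / ((1 + (\<tau>^2 + \<mu>^2)) * (h^2 + (\<tau>^2 + \<mu>^2)))"

end

theory Submission
  imports Defs
begin

lemma first_zero:
  fixes g :: "real \<Rightarrow> real"
  assumes cont: "continuous_on UNIV g"
    and dz: "\<And>x. g x = 0 \<Longrightarrow> \<exists>l>0. (g has_real_derivative l) (at x)"
    and ga: "g a = 0" and ab: "a < b"
  shows "g b > 0"
proof (rule ccontr)
  assume nb: "\<not> g b > 0"
  obtain l where l: "l > 0" "(g has_real_derivative l) (at a)" using dz[OF ga] by blast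
  obtain d where d: "d > 0" "\<And>h. h > 0 \<Longrightarrow> h < d \<Longrightarrow> g a < g (a + h)"
    using DERIV_pos_inc_right[OF l(2) l(1)] by blast
  define c where "c = a + min d (b - a) / 2"
  have c1: "a < c" "c < b" using d ab by (auto simp: c_def min_def field_simps)
  have gc: "g c > 0" using d(2)[of "min d (b - a) / 2"] d ab ga by (auto simp: c_def)
  define Z where "Z = {c..b} \<inter> g -` {..0}"
  have Zcl: "closed Z" unfolding Z_def
    by (intro closed_Int closed_atLeastAtMost continuous_closed_vimage cont closed_atMost) (use cont in \<open>auto simp: continuous_on_eq_continuous_at\<close>)
  have bZ: "b \<in> Z" using nb c1 by (auto simp: Z_def)
  have bdd: "bdd_below Z" unfolding Z_def by (rule bdd_belowI[of _ c]) auto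
  define t where "t = Inf Z"
  have tZ: "t \<in> Z" unfolding t_def using closed_contains_Inf[OF _ bdd Zcl] bZ by blast
  have tle: "\<And>z. z \<in> Z \<Longrightarrow> t \<le> z" unfolding t_def using bdd by (simp add: cInf_lower)
  have ct: "c < t" using tZ gc by (auto simp: Z_def less_eq_real_def)
  have gt0: "g t = 0"
  proof (rule ccontr)
    assume "g t \<noteq> 0"
    hence "g t < 0" using tZ by (auto simp: Z_def)
    then obtain z where z: "c \<le> z" "z \<le> t" "g z = 0"
      using IVT2'[of g t 0 c] gc ct cont
      by (metis continuous_on_subset less_eq_real_def subset_UNIV)
    hence "z \<in> Z" using tZ by (auto simp: Z_def)
    hence "t \<le> z" by (rule tle)
    with z \<open>g t \<noteq> 0\<close> show False by auto
  qed
  obtain l2 where l2: "l2 > 0" "(g has_real_derivative l2) (at t)" using dz[OF gt0] by blast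
  obtain d2 where d2: "d2 > 0" "\<And>h. h > 0 \<Longrightarrow> h < d2 \<Longrightarrow> g (t - h) < g t"
    using DERIV_pos_inc_left[OF l2(2) l2(1)] by blast
  define e where "e = min d2 (t - c) / 2"
  have e: "e > 0" "e < d2" "e < t - c" using d2 ct by (auto simp: e_def)
  have "g (t - e) < 0" using d2(2)[OF e(1) e(2)] gt0 by simp
  hence "t - e \<in> Z" using e tZ by (auto simp: Z_def)
  hence "t \<le> t - e" by (rule tle)
  with e show False by simp
qed

lemma Kzero_deriv:
  fixes h :: real and \<tau> \<mu> :: "real \<Rightarrow> real"
  assumes hpos: "h > 0"
    and d\<tau>: "\<And>s. (\<tau> has_real_derivative (1 + Kfun h (\<tau> s) (\<mu> s) * \<mu> s)) (at s)"
    and d\<mu>: "\<And>s. (\<mu> has_real_derivative (- Kfun h (\<tau> s) (\<mu> s) * \<tau> s)) (at s)"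
    and z: "Kfun h (\<tau> s) (\<mu> s) = 0"
  shows "\<exists>l>0. ((\<lambda>s. Kfun h (\<tau> s) (\<mu> s)) has_real_derivative l) (at s)"
proof -
  define N where "N = (\<lambda>s. 2 * ((\<tau> s)^2 + h^2 * (1 + (\<mu> s)^2)) * \<tau> s + (h^2 - 1) * (1 + (\<mu> s)^2) * \<mu> s)"
  define D where "D = (\<lambda>s. (1 + ((\<tau> s)^2 + (\<mu> s)^2)) * (h^2 + ((\<tau> s)^2 + (\<mu> s)^2)))"
  have KND: "(\<lambda>s. Kfun h (\<tau> s) (\<mu> s)) = (\<lambda>s. N s / D s)"
    by (auto simp: Kfun_def N_def D_def)
  have Dpos: "D s > 0" unfolding D_def using hpos
    by (intro mult_pos_pos) (auto intro: add_pos_nonneg)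
  have N0: "N s = 0" using z Dpos by (auto simp: KND[symmetric, THEN fun_cong] Kfun_def N_def D_def)
  have "\<exists>dD. (D has_real_derivative dD) (at s)"
    unfolding D_def by (rule exI, (rule derivative_eq_intros d\<tau> d\<mu> refl)+)
  then obtain dD where dD: "(D has_real_derivative dD) (at s)" by blast
  define a where "a = \<tau> s"
  define b where "b = \<mu> s"
  have dN: "(N has_real_derivative ((6*a^2 + 2*h^2*(1+b^2)) * (1 + Kfun h a b * b)
        + (4*h^2*a*b + (h^2-1)*(1+3*b^2)) * (- Kfun h a b * a))) (at s)"
    unfolding N_def a_def b_def
    by (rule derivative_eq_intros d\<tau> d\<mu> refl | simp add: algebra_simps power2_eq_square)+
  have dN': "(N has_real_derivative (6*a^2 + 2*h^2*(1+b^2))) (at s)"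
    using dN z by (simp add: a_def b_def)
  have "((\<lambda>s. N s / D s) has_real_derivative
      ((6*a^2 + 2*h^2*(1+b^2)) * D s - N s * dD) / (D s * D s)) (at s)"
    by (rule DERIV_divide[OF dN' dD]) (use Dpos in simp)
  moreover have "((6*a^2 + 2*h^2*(1+b^2)) * D s - N s * dD) / (D s * D s) > 0"
    proof -
    have "6*a^2 + 2*h^2*(1+b^2) > 0" using hpos by (intro add_nonneg_pos) (auto intro!: mult_pos_pos add_pos_nonneg)
    thus ?thesis using N0 Dpos by simp
  qed
  ultimately show ?thesis unfolding KND by blast
qed


theorem claim4:
  fixes h :: real and \<tau> \<mu> :: "real \<Rightarrow> real"
  assumes hpos: "h > 0"
    and d\<tau>: "\<And>s. (\<tau> has_real_derivative (1 + Kfun h (\<tau> s) (\<mu> s) * \<mu> s)) (at s)"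
    and d\<mu>: "\<And>s. (\<mu> has_real_derivative (- Kfun h (\<tau> s) (\<mu> s) * \<tau> s)) (at s)"
  shows "(\<forall>s1 s2. Kfun h (\<tau> s1) (\<mu> s1) = 0 \<and> Kfun h (\<tau> s2) (\<mu> s2) = 0 \<longrightarrow> s1 = s2)
       \<and> (\<forall>s1. Kfun h (\<tau> s1) (\<mu> s1) = 0 \<longrightarrow>
            (\<forall>s. s < s1 \<longrightarrow> Kfun h (\<tau> s) (\<mu> s) < 0) \<and>
            (\<forall>s. s > s1 \<longrightarrow> Kfun h (\<tau> s) (\<mu> s) > 0))"
proof -
  define g where "g = (\<lambda>s. Kfun h (\<tau> s) (\<mu> s))"
  have dz: "\<And>x. g x = 0 \<Longrightarrow> \<exists>l>0. (g has_real_derivative l) (at x)"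
    unfolding g_def using Kzero_deriv[OF hpos d\<tau> d\<mu>] by blast
  have cont: "continuous_on UNIV g"
  proof -
    have ct: "continuous_on UNIV \<tau>" "continuous_on UNIV \<mu>"
      using d\<tau> d\<mu> by (auto intro!: continuous_at_imp_continuous_on DERIV_isCont)
    have "continuous_on UNIV (\<lambda>s. (2 * ((\<tau> s)^2 + h^2 * (1 + (\<mu> s)^2)) * \<tau> s + (h^2 - 1) * (1 + (\<mu> s)^2) * \<mu> s)
      / ((1 + ((\<tau> s)^2 + (\<mu> s)^2)) * (h^2 + ((\<tau> s)^2 + (\<mu> s)^2))))"
      using hpos by (intro continuous_intros ct) (auto simp: add_pos_nonneg,
        (metis add_pos_nonneg zero_less_one zero_le_power2 add_nonneg_nonneg less_irrefl),
        (metis add_pos_nonneg zero_less_power2 zero_le_power2 add_nonneg_nonneg less_irrefl less_numeral_extra(3)))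
    thus ?thesis unfolding g_def Kfun_def .
  qed
  define g2 where "g2 = (\<lambda>x. - g (- x))"
  have cont2: "continuous_on UNIV g2" unfolding g2_def
    by (intro continuous_intros continuous_on_compose2[OF cont]) auto
  have dz2: "\<exists>l>0. (g2 has_real_derivative l) (at x)" if "g2 x = 0" for x
  proof -
    from that have "g (-x) = 0" by (simp add: g2_def)
    then obtain l where l: "l > 0" "(g has_real_derivative l) (at (-x))" using dz by blast
    have l2: "(g has_real_derivative l) (at (uminus x))" using l(2) by simp
    have dm: "(uminus has_real_derivative -1) (at x)"
      using DERIV_minus[OF DERIV_ident, of x UNIV] by (simp add: fun_eq_iff)
    have "((\<lambda>x. g (- x)) has_real_derivative (l * (-1))) (at x)"
      using DERIV_chain2[OF l2 dm] .
    hence "(g2 has_real_derivative (- (l * (-1)))) (at x)" unfolding g2_def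
      by (rule DERIV_minus)
    thus ?thesis using l by auto
  qed
  have R: "g b > 0" if "g a = 0" "a < b" for a b using first_zero[OF cont dz that] .
  have L: "g b < 0" if "g a = 0" "b < a" for a b
  proof -
    have "g2 (-a) = 0" using that(1) by (simp add: g2_def)
    moreover have "-a < -b" using that(2) by simp
    ultimately have "g2 (-b) > 0" using first_zero[of g2 "-a" "-b"] cont2 dz2 by blast
    thus ?thesis by (simp add: g2_def)
  qed
  have U: "s1 = s2" if "g s1 = 0" "g s2 = 0" for s1 s2
  proof (rule ccontr)
    assume "s1 \<noteq> s2"
    hence "s1 < s2 \<or> s2 < s1" by linarith
    thus False using R[of s1 s2] R[of s2 s1] that by auto
  qed
  show ?thesis using U R L unfolding g_def by blast
qed

end
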